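(* Fix a null parameter $\theta=(\rho,\gamma,\alpha_1,\beta_1,\dots,\alpha_n,\beta_n)$ satisfying (G1) and (G2), and define the alternative $\tilde\theta=(\rho^{(1)},\gamma^{(1)},\alpha_1,\beta_1,\dots,\alpha_n,\beta_n)$ by $(\rho^{(1)},\gamma^{(1)})=(\rho+\delta_1,\gamma)$ if $\theta$ is in Case (S), and $(\rho^{(1)},\gamma^{(1)})=(\rho+2\delta_2,\gamma-\delta_2)$ if $\theta$ is in Case (L), where $\delta_1,\delta_2$ may depend on $n$. Suppose $e^\rho\|\eta\|_1^2\delta_1^2\to0$ in Case (S) and $\|\mu\|_1\|\nu\|_1\delta_2^2\to0$ in Case (L) (with $\mu,\nu,\eta$ computed under $\theta$). Let $P_0^{(n)}$ and $P_1^{(n)}$ be the distributions of $A$ under $\theta$ and $\tilde\theta$ respectively. Then $\chi^2(P_0^{(n)},P_1^{(n)})\to0$ as $n\to\infty$.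
   Context: Asymptotic framework: $n\to\infty$ and all parameters may depend on $n$. $(x,y)$ is the inner product, $\|x\|_1$ the $\ell^1$ norm, $x_{\max}$ the largest entry. $\chi^2(P,Q)=\sum_x (Q(x)-P(x))^2/P(x)$ is the chi-square divergence. The $p_1$ model: a directed network on nodes $\{1,\dots,n\}$ has adjacency matrix $A\in\{0,1\}^{n\times n}$ with $A_{ii}=0$. The pairs $(A_{ij},A_{ji})$, $1\le i<j\le n$, are independent, and for parameters $\theta=(\rho,\gamma,\alpha_1,\beta_1,\dots,\alpha_n,\beta_n)$ with $\sum_i\alpha_i=\sum_i\beta_i=0$, for $a,b\in\{0,1\}$, $i\ne j$: $\mathbb P(A_{ij}=a,A_{ji}=b)=K_{ij}\exp(a(\gamma+\alpha_i+\beta_j)+b(\gamma+\alpha_j+\beta_i)+ab\rho)$, $K_{ij}=[1+e^{\gamma+\alpha_i+\beta_j}+e^{\gamma+\alpha_j+\beta_i}+e^{2\gamma+\alpha_i+\beta_j+\alpha_j+\beta_i+\rho}]^{-1}$. Let $\mu_i=e^{\gamma/2+\alpha_i}$, $\nu_i=e^{\gamma/2+\beta_i}$, $\eta_i=\mu_i\nu_i$; $\tilde\rho=\log(\|\eta\|_1^2/[(\mu,\eta)(\nu,\eta)])$. Conditions: (G1) $\mu_{\max}\to0$, $\nu_{\max}\to0$, $e^{\rho/2}\eta_{\max}\to0$. (G2) $e^{\rho/2}\|\eta\|_1\to\infty$ and $\|\eta\|_1\to\infty$. Case (S): $e^\rho/e^{\tilde\rho}\to0$; Case (L): $e^\rho\ge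 Ce^{\tilde\rho}$ for a constant $C>0$. *)

theory Defs
  imports "HOL-Analysis.Analysis"
begin

definition adj_set :: "nat \<Rightarrow> (nat \<Rightarrow> nat \<Rightarrow> bool) set" where
  "adj_set n = {A. \<forall>i j. A i j \<longrightarrow> i < n \<and> j < n \<and> i \<noteq> j}"

definition p1_K :: "real \<Rightarrow> real \<Rightarrow> (nat \<Rightarrow> real) \<Rightarrow> (nat \<Rightarrow> real) \<Rightarrow> nat \<Rightarrow> nat \<Rightarrow> real" where
  "p1_K \<rho> \<gamma> \<alpha> \<beta> i j = inverse (1 + exp (\<gamma> + \<alpha> i + \<beta> j) + exp (\<gamma> + \<alpha> j + \<beta> i)
      + exp (2 * \<gamma> + \<alpha> i + \<beta> j + \<alpha> j + \<beta> i + \<rho>))"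

definition p1_dyad :: "real \<Rightarrow> real \<Rightarrow> (nat \<Rightarrow> real) \<Rightarrow> (nat \<Rightarrow> real) \<Rightarrow> nat \<Rightarrow> nat \<Rightarrow> bool \<Rightarrow> bool \<Rightarrow> real" where
  "p1_dyad \<rho> \<gamma> \<alpha> \<beta> i j a b = p1_K \<rho> \<gamma> \<alpha> \<beta> i j *
     exp (of_bool a * (\<gamma> + \<alpha> i + \<beta> j) + of_bool b * (\<gamma> + \<alpha> j + \<beta> i) + of_bool (a \<and> b) * \<rho>)"

definition p1_pmf :: "nat \<Rightarrow> real \<Rightarrow> real \<Rightarrow> (nat \<Rightarrow> real) \<Rightarrow> (nat \<Rightarrow> real) \<Rightarrow> (nat \<Rightarrow> nat \<Rightarrow> bool) \<Rightarrow> real" where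
  "p1_pmf n \<rho> \<gamma> \<alpha> \<beta> A =
     (if A \<in> adj_set n then (\<Prod>(i,j)\<in>{(i,j). i < j \<and> j < n}. p1_dyad \<rho> \<gamma> \<alpha> \<beta> i j (A i j) (A j i)) else 0)"

definition chi_square :: "'a set \<Rightarrow> ('a \<Rightarrow> real) \<Rightarrow> ('a \<Rightarrow> real) \<Rightarrow> real" where
  "chi_square S P Q = (\<Sum>x\<in>S. (Q x - P x)^2 / P x)"

definition p1_mu :: "real \<Rightarrow> (nat \<Rightarrow> real) \<Rightarrow> nat \<Rightarrow> real" where
  "p1_mu \<gamma> \<alpha> i = exp (\<gamma> / 2 + \<alpha> i)"

definition p1_eta :: "real \<Rightarrow> (nat \<Rightarrow> real) \<Rightarrow> (nat \<Rightarrow> real) \<Rightarrow> nat \<Rightarrow> real" where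
  "p1_eta \<gamma> \<alpha> \<beta> i = p1_mu \<gamma> \<alpha> i * p1_mu \<gamma> \<beta> i"

definition l1 :: "nat \<Rightarrow> (nat \<Rightarrow> real) \<Rightarrow> real" where
  "l1 n x = (\<Sum>i<n. \<bar>x i\<bar>)"

definition ip :: "nat \<Rightarrow> (nat \<Rightarrow> real) \<Rightarrow> (nat \<Rightarrow> real) \<Rightarrow> real" where
  "ip n x y = (\<Sum>i<n. x i * y i)"

definition vmax :: "nat \<Rightarrow> (nat \<Rightarrow> real) \<Rightarrow> real" where
  "vmax n x = Max (x ` {..<n})"

definition rho_tilde :: "nat \<Rightarrow> real \<Rightarrow> (nat \<Rightarrow> real) \<Rightarrow> (nat \<Rightarrow> real) \<Rightarrow> real" where
  "rho_tilde n \<gamma> \<alpha> \<beta> = ln ((l1 n (p1_eta \<gamma> \<alpha> \<beta>))^2 /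
      (ip n (p1_mu \<gamma> \<alpha>) (p1_eta \<gamma> \<alpha> \<beta>) * ip n (p1_mu \<gamma> \<beta>) (p1_eta \<gamma> \<alpha> \<beta>)))"

end

theory Submission
  imports Defs "HOL-Library.FuncSet"
begin


lemma finite_D: "finite {(i,j::nat). i<j \<and> j<n}"
  by (rule finite_subset[of _ "{..<n}\<times>{..<n}"]) auto

lemma factor:
  fixes f :: "nat \<Rightarrow> nat \<Rightarrow> bool \<Rightarrow> bool \<Rightarrow> real"
  shows "(\<Sum>A\<in>adj_set n. \<Prod>(i,j)\<in>{(i,j). i<j \<and> j<n}. f i j (A i j) (A j i))
       = (\<Prod>(i,j)\<in>{(i,j). i<j \<and> j<n}. \<Sum>ab\<in>UNIV. f i j (fst ab) (snd ab))"
proof -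
  define D where "D = {(i,j::nat). i<j \<and> j<n}"
  have fD: "finite D" unfolding D_def by (rule finite_D)
  define toP where "toP A = (\<lambda>x. if x \<in> D then (A (fst x) (snd x), A (snd x) (fst x)) else undefined)" for A :: "nat \<Rightarrow> nat \<Rightarrow> bool"
  define toA where "toA g = (\<lambda>a b. if (a,b)\<in>D then fst (g (a,b)) else if (b,a)\<in>D then snd (g (b,a)) else False)" for g :: "nat \<times> nat \<Rightarrow> bool \<times> bool"
  have "(\<Prod>(i,j)\<in>D. \<Sum>ab\<in>UNIV. f i j (fst ab) (snd ab))
     = (\<Prod>x\<in>D. \<Sum>ab\<in>UNIV. (\<lambda>x ab. f (fst x) (snd x) (fst ab) (snd ab)) x ab)"
    by (simp add: case_prod_beta')
  also have "\<dots> = (\<Sum>g\<in>PiE D (\<lambda>_. UNIV). \<Prod>x\<in>D. f (fst x) (snd x) (fst (g x)) (snd (g x)))"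
    by (rule prod_sum_PiE) (auto simp: fD)
  also have "\<dots> = (\<Sum>A\<in>adj_set n. \<Prod>(i,j)\<in>D. f i j (A i j) (A j i))"
  proof (rule sum.reindex_bij_witness[of _ toP toA])
    fix A assume A: "A \<in> adj_set n"
    show "toA (toP A) = A"
      using A unfolding adj_set_def D_def toA_def toP_def
      by (intro ext) (auto, metis linorder_neqE_nat)
    show "toP A \<in> PiE D (\<lambda>_. UNIV)"
      by (auto simp: PiE_def extensional_def toP_def)
  next
    fix g assume g: "g \<in> PiE D (\<lambda>_. (UNIV :: (bool \<times> bool) set))"
    show "toP (toA g) = g"
      using g unfolding D_def toA_def toP_def
      by (intro ext) (clarsimp simp: PiE_def extensional_def; metis prod.collapse)
    show "toA g \<in> adj_set n"
      unfolding adj_set_def D_def toA_def by auto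
    show "(\<Prod>(i,j)\<in>D. f i j (toA g i j) (toA g j i))
       = (\<Prod>x\<in>D. f (fst x) (snd x) (fst (g x)) (snd (g x)))"
      by (rule prod.cong) (auto simp: toA_def D_def)
  qed
  finally show ?thesis unfolding D_def by simp
qed


definition gd :: "real \<Rightarrow> real \<Rightarrow> real \<Rightarrow> bool \<Rightarrow> bool \<Rightarrow> real" where
  "gd x y r a b = exp (of_bool a * x + of_bool b * y + of_bool (a \<and> b) * r) / (1 + exp x + exp y + exp (x + y + r))"

lemma dyad_eq: "p1_dyad \<rho> \<gamma> \<alpha> \<beta> i j a b = gd (\<gamma> + \<alpha> i + \<beta> j) (\<gamma> + \<alpha> j + \<beta> i) \<rho> a b"
proof -
  have e: "2 * \<gamma> + \<alpha> i + \<beta> j + \<alpha> j + \<beta> i + \<rho> = (\<gamma> + \<alpha> i + \<beta> j) + (\<gamma> + \<alpha> j + \<beta> i) + \<rho>" by (simp add: algebra_simps)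
  show ?thesis unfolding p1_dyad_def p1_K_def gd_def e by (simp add: divide_inverse mult.commute)
qed

lemma sum4: "(\<Sum>ab\<in>(UNIV::(bool\<times>bool) set). f ab) = f (True,True) + f (True,False) + f (False,True) + f (False,False)"
proof -
  have UV: "(UNIV::(bool\<times>bool) set) = {(True,True),(True,False),(False,True),(False,False)}" by auto
  show ?thesis by (subst UV) (simp add: add.assoc)
qed

lemma Zpos: "(0::real) < 1 + exp x + exp y + exp z"
  by (smt (verit) exp_gt_zero)

lemma gd_pos: "0 < gd x y r a b"
  unfolding gd_def using Zpos by simp

lemma gd_vals:
  "gd x y r True True = exp (x+y+r) / (1 + exp x + exp y + exp (x + y + r))"
  "gd x y r True False = exp x / (1 + exp x + exp y + exp (x + y + r))"
  "gd x y r False True = exp y / (1 + exp x + exp y + exp (x + y + r))"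
  "gd x y r False False = 1 / (1 + exp x + exp y + exp (x + y + r))"
  unfolding gd_def by simp_all

lemma alg_sum: "(u::real) > 0 \<Longrightarrow> v > 0 \<Longrightarrow> w > 0 \<Longrightarrow> w / (1+u+v+w) + u / (1+u+v+w) + v / (1+u+v+w) + 1 / (1+u+v+w) = 1"
proof -
  assume "(u::real) > 0" "v > 0" "w > 0"
  then have "1+u+v+w \<noteq> 0" by simp
  then show ?thesis by (simp add: add_divide_distrib[symmetric])
qed

lemma gd_sum: "(\<Sum>ab\<in>UNIV. gd x y r (fst ab) (snd ab)) = 1"
  unfolding sum4 fst_conv snd_conv gd_vals by (rule alg_sum) simp_all

lemma alg_gen:
  fixes Z Z' a b c d A B C D :: real
  assumes "Z > 0" "Z' > 0" "A > 0" "B > 0" "C > 0" "D > 0"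
  shows "(a / Z')\<^sup>2 / (A / Z) + (b / Z')\<^sup>2 / (B / Z) + (c / Z')\<^sup>2 / (C / Z) + (d / Z')\<^sup>2 / (D / Z)
       = Z * (a^2/A + b^2/B + c^2/C + d^2/D) / Z'^2"
  using assms by (simp add: field_simps power2_eq_square)

lemma alg_S:
  fixes u v w t :: real
  assumes "u > 0" "v > 0" "w > 0" "t > 0"
  shows "(w * t / (1+u+v+w * t))\<^sup>2 / (w / (1+u+v+w)) + (u / (1+u+v+w * t))\<^sup>2 / (u / (1+u+v+w))
       + (v / (1+u+v+w * t))\<^sup>2 / (v / (1+u+v+w)) + (1 / (1+u+v+w * t))\<^sup>2 / (1 / (1+u+v+w))
     = (1+u+v+w) * ((1+u+v+w) + w * (t^2 - 1)) / ((1+u+v+w) + w * (t - 1))\<^sup>2"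
proof -
  have p: "1+u+v+w * t > 0" "1+u+v+w > 0" using assms by (smt (verit) mult_pos_pos)+
  have e1: "(w * t)^2/w + u^2/u + v^2/v + 1^2/1 = (1+u+v+w) + w * (t^2 - 1)"
    using assms by (simp add: field_simps power2_eq_square)
  have e2: "1+u+v+w * t = (1+u+v+w) + w * (t - 1)" by (simp add: algebra_simps)
  have "(w * t / (1+u+v+w * t))\<^sup>2 / (w / (1+u+v+w)) + (u / (1+u+v+w * t))\<^sup>2 / (u / (1+u+v+w))
       + (v / (1+u+v+w * t))\<^sup>2 / (v / (1+u+v+w)) + (1 / (1+u+v+w * t))\<^sup>2 / (1 / (1+u+v+w))
     = (1+u+v+w) * ((w * t)^2/w + u^2/u + v^2/v + 1^2/1) / (1+u+v+w * t)^2"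
    by (rule alg_gen) (use assms p in auto)
  then show ?thesis by (simp only: e1 e2)
qed

lemma alg_L:
  fixes u v w t :: real
  assumes "u > 0" "v > 0" "w > 0" "t > 0"
  shows "(w / (1+u * t+v * t+w))\<^sup>2 / (w / (1+u+v+w)) + (u * t / (1+u * t+v * t+w))\<^sup>2 / (u / (1+u+v+w))
       + (v * t / (1+u * t+v * t+w))\<^sup>2 / (v / (1+u+v+w)) + (1 / (1+u * t+v * t+w))\<^sup>2 / (1 / (1+u+v+w))
     = (1+u+v+w) * ((1+u+v+w) + (u+v) * (t^2 - 1)) / ((1+u+v+w) + (u+v) * (t - 1))\<^sup>2"
proof -
  have p: "1+u * t+v * t+w > 0" "1+u+v+w > 0" using assms by (smt (verit) mult_pos_pos)+
  have e1: "w^2/w + (u * t)^2/u + (v * t)^2/v + 1^2/1 = (1+u+v+w) + (u+v) * (t^2 - 1)"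
    using assms by (simp add: field_simps power2_eq_square)
  have e2: "1+u * t+v * t+w = (1+u+v+w) + (u+v) * (t - 1)" by (simp add: algebra_simps)
  have "(w / (1+u * t+v * t+w))\<^sup>2 / (w / (1+u+v+w)) + (u * t / (1+u * t+v * t+w))\<^sup>2 / (u / (1+u+v+w))
       + (v * t / (1+u * t+v * t+w))\<^sup>2 / (v / (1+u+v+w)) + (1 / (1+u * t+v * t+w))\<^sup>2 / (1 / (1+u+v+w))
     = (1+u+v+w) * (w^2/w + (u * t)^2/u + (v * t)^2/v + 1^2/1) / (1+u * t+v * t+w)^2"
    by (rule alg_gen) (use assms p in auto)
  then show ?thesis by (simp only: e1 e2)
qed

lemma gdS: "(\<Sum>ab\<in>UNIV. (gd x y (r + d) (fst ab) (snd ab))\<^sup>2 / gd x y r (fst ab) (snd ab))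
   = (1 + exp x + exp y + exp (x+y+r)) * ((1 + exp x + exp y + exp (x+y+r)) + exp (x+y+r) * (exp d ^ 2 - 1))
     / ((1 + exp x + exp y + exp (x+y+r)) + exp (x+y+r) * (exp d - 1))\<^sup>2"
proof -
  have e1: "exp (x + y + (r + d)) = exp (x+y+r) * exp d" by (simp add: exp_add[symmetric] add.assoc)
  show ?thesis unfolding sum4 fst_conv snd_conv gd_vals e1 by (rule alg_S) simp_all
qed

lemma gdL: "(\<Sum>ab\<in>UNIV. (gd (x - d) (y - d) (r + 2 * d) (fst ab) (snd ab))\<^sup>2 / gd x y r (fst ab) (snd ab))
   = (1 + exp x + exp y + exp (x+y+r)) * ((1 + exp x + exp y + exp (x+y+r)) + (exp x + exp y) * (exp (-d) ^ 2 - 1))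
     / ((1 + exp x + exp y + exp (x+y+r)) + (exp x + exp y) * (exp (-d) - 1))\<^sup>2"
proof -
  have e1: "exp (x - d + (y - d) + (r + 2 * d)) = exp (x+y+r)" by (rule arg_cong[where f=exp]) (simp add: algebra_simps)
  have e2: "exp (x - d) = exp x * exp (-d)" "exp (y - d) = exp y * exp (-d)"
    by (simp_all add: exp_add[symmetric])
  show ?thesis unfolding sum4 fst_conv snd_conv gd_vals e1 e2 by (rule alg_L) simp_all
qed



lemma div_le1: "0 \<le> (x::real) \<Longrightarrow> 1 \<le> Z \<Longrightarrow> x / Z \<le> x"
  by (simp add: divide_le_eq mult_le_cancel_left1)

lemma dyad_bound:
  fixes Z m d :: real
  assumes Z: "Z \<ge> 1" and m: "0 \<le> m" "m \<le> Z"
  shows "0 \<le> Z * (Z + m * (exp d ^ 2 - 1)) / (Z + m * (exp d - 1))\<^sup>2 - 1"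
    and "Z * (Z + m * (exp d ^ 2 - 1)) / (Z + m * (exp d - 1))\<^sup>2 - 1 \<le> m * (exp \<bar>d\<bar> - 1)\<^sup>2"
proof -
  define t where "t = exp d"
  have t: "t > 0" unfolding t_def by simp
  define Z' where "Z' = Z + m * (t - 1)"
  have Z'eq: "Z' = (Z - m) + m * t" unfolding Z'_def by (simp add: algebra_simps)
  have Z'ge: "Z' \<ge> Z * min 1 t"
  proof (cases "t \<ge> 1")
    case True then show ?thesis unfolding Z'_def using m by (simp add: mult_nonneg_nonneg)
  next
    case False
    then have "min 1 t = t" by simp
    moreover have "(Z - m) + m * t \<ge> (Z - m) * t + m * t" using False m t
      by (simp add: mult_left_le)
    ultimately show ?thesis using Z'eq by (simp add: algebra_simps)
  qed
  have mpos: "min 1 t > 0" using t by simp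
  have Zpos: "Z * min 1 t > 0" using Z mpos by simp
  have Z'pos: "Z' > 0" using Z'ge Zpos by linarith
  have key: "Z * (Z + m * (t ^ 2 - 1)) / Z'\<^sup>2 - 1 = m * (Z - m) * (t - 1)^2 / Z'^2"
  proof -
    have poly: "Z * (Z + m * (t ^ 2 - 1)) = Z'^2 + m * (Z - m) * (t - 1)^2"
      unfolding Z'_def by (simp add: power2_eq_square algebra_simps)
    show ?thesis unfolding poly using Z'pos by (simp add: field_simps)
  qed
  show "0 \<le> Z * (Z + m * (exp d ^ 2 - 1)) / (Z + m * (exp d - 1))\<^sup>2 - 1"
    using key m unfolding t_def[symmetric] Z'_def[symmetric] by simp
  have "m * (Z - m) * (t - 1)^2 / Z'^2 \<le> m * Z * (t - 1)^2 / (Z * min 1 t)^2"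
  proof (rule frac_le)
    show "0 \<le> m * Z * (t - 1)\<^sup>2" using m Z by simp
    show "m * (Z - m) * (t - 1)\<^sup>2 \<le> m * Z * (t - 1)\<^sup>2" using m Z
      by (intro mult_right_mono mult_left_mono) auto
    show "0 < (Z * min 1 t)\<^sup>2" using Zpos by (metis zero_less_power)
    show "(Z * min 1 t)\<^sup>2 \<le> Z'\<^sup>2" using Z'ge Zpos by (intro power_mono) auto
  qed
  also have "\<dots> = m * (t - 1)^2 / min 1 t ^ 2 / Z"
    using Z mpos by (simp add: field_simps power2_eq_square)
  also have "\<dots> \<le> m * (t - 1)^2 / min 1 t ^ 2"
    by (rule div_le1) (use Z m in simp_all)
  also have "m * (t - 1)^2 / min 1 t ^ 2 = m * (exp \<bar>d\<bar> - 1)\<^sup>2"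
  proof (cases "d \<ge> 0")
    case True
    then have "t \<ge> 1" unfolding t_def by simp
    then show ?thesis using True unfolding t_def by simp
  next
    case False
    then have "t < 1" unfolding t_def by simp
    then have e1: "min 1 t = t" by simp
    have e2: "exp \<bar>d\<bar> = 1 / t" using False unfolding t_def by (simp add: exp_minus field_simps)
    show ?thesis unfolding e1 e2 using t by (simp add: field_simps power2_eq_square)
  qed
  finally show "Z * (Z + m * (exp d ^ 2 - 1)) / (Z + m * (exp d - 1))\<^sup>2 - 1 \<le> m * (exp \<bar>d\<bar> - 1)\<^sup>2"
    using key unfolding t_def[symmetric] Z'_def[symmetric] by simp
qed



lemma chi_generic:
  fixes P Q :: "(nat \<Rightarrow> nat \<Rightarrow> bool) \<Rightarrow> real" and p q :: "nat \<Rightarrow> nat \<Rightarrow> bool \<Rightarrow> bool \<Rightarrow> real"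
    and c :: "nat \<Rightarrow> nat \<Rightarrow> real"
  assumes PA: "\<And>A. A \<in> adj_set n \<Longrightarrow> P A = (\<Prod>(i,j)\<in>{(i,j). i<j \<and> j<n}. p i j (A i j) (A j i))"
    and QA: "\<And>A. A \<in> adj_set n \<Longrightarrow> Q A = (\<Prod>(i,j)\<in>{(i,j). i<j \<and> j<n}. q i j (A i j) (A j i))"
    and ppos: "\<And>i j a b. p i j a b > 0"
    and psum: "\<And>i j. (\<Sum>ab\<in>UNIV. p i j (fst ab) (snd ab)) = 1"
    and qsum: "\<And>i j. (\<Sum>ab\<in>UNIV. q i j (fst ab) (snd ab)) = 1"
    and lb: "\<And>i j. 1 \<le> (\<Sum>ab\<in>UNIV. (q i j (fst ab) (snd ab))\<^sup>2 / p i j (fst ab) (snd ab))"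
    and ub: "\<And>i j. (\<Sum>ab\<in>UNIV. (q i j (fst ab) (snd ab))\<^sup>2 / p i j (fst ab) (snd ab)) - 1 \<le> c i j"
  shows "0 \<le> chi_square (adj_set n) P Q \<and> chi_square (adj_set n) P Q \<le> exp (\<Sum>(i,j)\<in>{(i,j). i<j \<and> j<n}. c i j) - 1"
proof -
  define D where "D = {(i,j::nat). i<j \<and> j<n}"
  have fD: "finite D" unfolding D_def by (rule finite_D)
  define S where "S i j = (\<Sum>ab\<in>UNIV. (q i j (fst ab) (snd ab))\<^sup>2 / p i j (fst ab) (snd ab))" for i j
  have Ppos: "P A > 0" if "A \<in> adj_set n" for A
    unfolding PA[OF that] by (rule prod_pos) (auto simp: ppos)
  have "chi_square (adj_set n) P Q = (\<Sum>A\<in>adj_set n. (Q A)\<^sup>2 / P A - 2 * Q A + P A)"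
    unfolding chi_square_def
  proof (rule sum.cong)
    fix A assume "A \<in> adj_set n"
    then have "P A > 0" by (rule Ppos)
    then show "(Q A - P A)\<^sup>2 / P A = (Q A)\<^sup>2 / P A - 2 * Q A + P A"
      by (simp add: field_simps power2_eq_square)
  qed simp
  also have "\<dots> = (\<Sum>A\<in>adj_set n. (Q A)\<^sup>2 / P A) - 2 * (\<Sum>A\<in>adj_set n. Q A) + (\<Sum>A\<in>adj_set n. P A)"
    by (simp add: sum.distrib sum_subtractf sum_distrib_left)
  also have "(\<Sum>A\<in>adj_set n. (Q A)\<^sup>2 / P A) = (\<Sum>A\<in>adj_set n. \<Prod>(i,j)\<in>D. (\<lambda>i j a b. (q i j a b)\<^sup>2 / p i j a b) i j (A i j) (A j i))"
  proof (rule sum.cong)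
    fix A assume A: "A \<in> adj_set n"
    show "(Q A)\<^sup>2 / P A = (\<Prod>(i,j)\<in>D. (\<lambda>i j a b. (q i j a b)\<^sup>2 / p i j a b) i j (A i j) (A j i))"
      unfolding PA[OF A] QA[OF A] D_def prod_power_distrib prod_dividef[symmetric]
      by (rule prod.cong) auto
  qed simp
  also have "\<dots> = (\<Prod>(i,j)\<in>D. S i j)"
    using factor[of "\<lambda>i j a b. (q i j a b)\<^sup>2 / p i j a b" n] unfolding D_def S_def by simp
  also have "(\<Sum>A\<in>adj_set n. Q A) = (\<Sum>A\<in>adj_set n. \<Prod>(i,j)\<in>D. q i j (A i j) (A j i))"
    by (rule sum.cong) (auto simp: QA D_def)
  also have "\<dots> = 1" unfolding D_def factor qsum by simp
  also have "(\<Sum>A\<in>adj_set n. P A) = (\<Sum>A\<in>adj_set n. \<Prod>(i,j)\<in>D. p i j (A i j) (A j i))"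
    by (rule sum.cong) (auto simp: PA D_def)
  also have "\<dots> = 1" unfolding D_def factor psum by simp
  finally have chi: "chi_square (adj_set n) P Q = (\<Prod>(i,j)\<in>D. S i j) - 1" by simp
  have "1 \<le> (\<Prod>(i,j)\<in>D. S i j)"
    by (rule prod_ge_1) (auto simp: S_def lb)
  moreover have "(\<Prod>(i,j)\<in>D. S i j) \<le> (\<Prod>(i,j)\<in>D. exp (c i j))"
  proof (rule prod_mono)
    fix x assume "x \<in> D"
    obtain i j where x: "x = (i,j)" by fastforce
    have "1 \<le> S i j" by (simp add: S_def lb)
    moreover have "S i j \<le> 1 + c i j" using ub[of i j] by (simp add: S_def)
    moreover have "1 + c i j \<le> exp (c i j)" by (rule exp_ge_add_one_self)
    ultimately have "0 \<le> S i j \<and> S i j \<le> exp (c i j)" by linarith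
    then show "0 \<le> (case x of (i,j) \<Rightarrow> S i j) \<and> (case x of (i,j) \<Rightarrow> S i j) \<le> (case x of (i,j) \<Rightarrow> exp (c i j))"
      unfolding x by (simp del: exp_ge_add_one_self)
  qed
  moreover have "(\<Prod>(i,j)\<in>D. exp (c i j)) = exp (\<Sum>(i,j)\<in>D. c i j)"
    using exp_sum[OF fD, of "\<lambda>(i,j). c i j"] by (simp add: case_prod_beta')
  ultimately show ?thesis unfolding chi D_def by simp
qed



lemma sumD_sq:
  fixes f :: "nat \<Rightarrow> real"
  assumes "\<And>i. 0 \<le> f i"
  shows "(\<Sum>(i,j)\<in>{(i,j). i<j \<and> j<n}. f i * f j) \<le> (\<Sum>i<n. f i)^2"
proof -
  have "(\<Sum>(i,j)\<in>{(i,j). i<j \<and> j<n}. f i * f j) \<le> (\<Sum>(i,j)\<in>{..<n}\<times>{..<n}. f i * f j)"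
    by (rule sum_mono2) (auto simp: assms)
  also have "\<dots> = (\<Sum>i<n. f i) * (\<Sum>j<n. f j)"
    by (simp add: sum_product sum.cartesian_product)
  finally show ?thesis by (simp add: power2_eq_square)
qed

lemma sumD_sym:
  fixes g :: "nat \<Rightarrow> nat \<Rightarrow> real"
  assumes "\<And>i j. 0 \<le> g i j"
  shows "(\<Sum>(i,j)\<in>{(i,j). i<j \<and> j<n}. g i j + g j i) \<le> (\<Sum>i<n. \<Sum>j<n. g i j)"
proof -
  define D where "D = {(i,j::nat). i<j \<and> j<n}"
  define D' where "D' = {(i,j::nat). j<i \<and> i<n}"
  have fD: "finite D" unfolding D_def by (rule finite_D)
  have fD': "finite D'" unfolding D'_def by (rule finite_subset[of _ "{..<n}\<times>{..<n}"]) auto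
  have "(\<Sum>(i,j)\<in>D. g j i) = (\<Sum>(i,j)\<in>D'. g i j)"
    by (rule sum.reindex_bij_witness[of _ "\<lambda>(i,j). (j,i)" "\<lambda>(i,j). (j,i)"]) (auto simp: D_def D'_def)
  then have "(\<Sum>(i,j)\<in>D. g i j + g j i) = (\<Sum>(i,j)\<in>D. g i j) + (\<Sum>(i,j)\<in>D'. g i j)"
    by (simp add: sum.distrib case_prod_beta')
  also have "\<dots> = (\<Sum>(i,j)\<in>D \<union> D'. g i j)"
    by (rule sum.union_disjoint[symmetric]) (use fD fD' in \<open>auto simp: D_def D'_def\<close>)
  also have "\<dots> \<le> (\<Sum>(i,j)\<in>{..<n}\<times>{..<n}. g i j)"
    by (rule sum_mono2) (auto simp: assms D_def D'_def)
  also have "\<dots> = (\<Sum>i<n. \<Sum>j<n. g i j)"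
    by (simp add: sum.cartesian_product)
  finally show ?thesis unfolding D_def .
qed

lemma lim_aux:
  fixes X \<delta> :: "nat \<Rightarrow> real"
  assumes X1: "\<forall>\<^sub>F n in sequentially. X n \<ge> 1"
    and lim: "(\<lambda>n. X n * (\<delta> n)^2) \<longlonglongrightarrow> 0"
  shows "(\<lambda>n. exp (X n * (exp \<bar>\<delta> n\<bar> - 1)^2) - 1) \<longlonglongrightarrow> 0"
proof -
  have d2: "(\<lambda>n. (\<delta> n)^2) \<longlonglongrightarrow> 0"
  proof (rule tendsto_sandwich[OF _ _ tendsto_const lim])
    show "\<forall>\<^sub>F n in sequentially. 0 \<le> (\<delta> n)^2" by simp
    show "\<forall>\<^sub>F n in sequentially. (\<delta> n)^2 \<le> X n * (\<delta> n)^2"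
      using X1 by eventually_elim (simp add: mult_le_cancel_right1)
  qed
  then have "(\<lambda>n. sqrt ((\<delta> n)^2)) \<longlonglongrightarrow> sqrt 0" by (intro tendsto_intros)
  then have "(\<lambda>n. \<bar>\<delta> n\<bar>) \<longlonglongrightarrow> 0" by simp
  then have small: "\<forall>\<^sub>F n in sequentially. \<bar>\<delta> n\<bar> < 1/2"
    by (rule order_tendstoD) simp
  have Y: "(\<lambda>n. X n * (exp \<bar>\<delta> n\<bar> - 1)^2) \<longlonglongrightarrow> 0"
  proof (rule tendsto_sandwich[OF _ _ tendsto_const])
    show "\<forall>\<^sub>F n in sequentially. 0 \<le> X n * (exp \<bar>\<delta> n\<bar> - 1)^2"
      using X1 by eventually_elim simp
    show "\<forall>\<^sub>F n in sequentially. X n * (exp \<bar>\<delta> n\<bar> - 1)^2 \<le> 4 * (X n * (\<delta> n)^2)"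
      using X1 small
    proof eventually_elim
      case (elim n)
      have "norm (exp \<bar>\<delta> n\<bar>) \<le> 1 + 2 * norm \<bar>\<delta> n\<bar>"
        by (rule exp_bound_lemma) (use elim in simp)
      then have c1: "exp \<bar>\<delta> n\<bar> - 1 \<le> 2 * \<bar>\<delta> n\<bar>" by simp
      have c2: "0 \<le> exp \<bar>\<delta> n\<bar> - 1" by simp
      have "(exp \<bar>\<delta> n\<bar> - 1)^2 \<le> (2 * \<bar>\<delta> n\<bar>)^2"
        using power_mono[OF c1 c2] .
      then have "(exp \<bar>\<delta> n\<bar> - 1)^2 \<le> 4 * (\<delta> n)^2" by (simp add: power_mult_distrib)
      then have "X n * (exp \<bar>\<delta> n\<bar> - 1)^2 \<le> X n * (4 * (\<delta> n)^2)"
        using elim by (intro mult_left_mono) auto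
      then show ?case by simp
    qed
    show "(\<lambda>n. 4 * (X n * (\<delta> n)^2)) \<longlonglongrightarrow> 0"
      using tendsto_mult_right_zero[OF lim, of 4] by simp
  qed
  have "(\<lambda>n. exp (X n * (exp \<bar>\<delta> n\<bar> - 1)^2) - 1) \<longlonglongrightarrow> exp 0 - 1"
    by (intro tendsto_intros Y)
  then show ?thesis by simp
qed



lemma dyad_boundS:
  "1 \<le> (\<Sum>ab\<in>UNIV. (gd x y (r + d) (fst ab) (snd ab))\<^sup>2 / gd x y r (fst ab) (snd ab))"
  "(\<Sum>ab\<in>UNIV. (gd x y (r + d) (fst ab) (snd ab))\<^sup>2 / gd x y r (fst ab) (snd ab)) - 1 \<le> exp (x+y+r) * (exp \<bar>d\<bar> - 1)\<^sup>2"
proof -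
  have h: "1 \<le> 1 + exp x + exp y + exp (x+y+r)" "0 \<le> exp (x+y+r)" "exp (x+y+r) \<le> 1 + exp x + exp y + exp (x+y+r)"
    by (smt (verit) exp_gt_zero)+
  show "1 \<le> (\<Sum>ab\<in>UNIV. (gd x y (r + d) (fst ab) (snd ab))\<^sup>2 / gd x y r (fst ab) (snd ab))"
    unfolding gdS using dyad_bound(1)[OF h, of d] by simp
  show "(\<Sum>ab\<in>UNIV. (gd x y (r + d) (fst ab) (snd ab))\<^sup>2 / gd x y r (fst ab) (snd ab)) - 1 \<le> exp (x+y+r) * (exp \<bar>d\<bar> - 1)\<^sup>2"
    unfolding gdS using dyad_bound(2)[OF h, of d] by simp
qed

lemma dyad_boundL:
  "1 \<le> (\<Sum>ab\<in>UNIV. (gd (x - d) (y - d) (r + 2 * d) (fst ab) (snd ab))\<^sup>2 / gd x y r (fst ab) (snd ab))"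
  "(\<Sum>ab\<in>UNIV. (gd (x - d) (y - d) (r + 2 * d) (fst ab) (snd ab))\<^sup>2 / gd x y r (fst ab) (snd ab)) - 1 \<le> (exp x + exp y) * (exp \<bar>d\<bar> - 1)\<^sup>2"
proof -
  have h: "1 \<le> 1 + exp x + exp y + exp (x+y+r)" "0 \<le> exp x + exp y" "exp x + exp y \<le> 1 + exp x + exp y + exp (x+y+r)"
    by (smt (verit) exp_gt_zero)+
  show "1 \<le> (\<Sum>ab\<in>UNIV. (gd (x - d) (y - d) (r + 2 * d) (fst ab) (snd ab))\<^sup>2 / gd x y r (fst ab) (snd ab))"
    unfolding gdL using dyad_bound(1)[OF h, of "-d"] by simp
  show "(\<Sum>ab\<in>UNIV. (gd (x - d) (y - d) (r + 2 * d) (fst ab) (snd ab))\<^sup>2 / gd x y r (fst ab) (snd ab)) - 1 \<le> (exp x + exp y) * (exp \<bar>d\<bar> - 1)\<^sup>2"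
    unfolding gdL using dyad_bound(2)[OF h, of "-d"] by simp
qed

lemma dyad_eqL: "p1_dyad (\<rho> + 2 * \<delta>) (\<gamma> - \<delta>) \<alpha> \<beta> i j a b = gd ((\<gamma> + \<alpha> i + \<beta> j) - \<delta>) ((\<gamma> + \<alpha> j + \<beta> i) - \<delta>) (\<rho> + 2 * \<delta>) a b"
  unfolding dyad_eq by (simp add: algebra_simps)

lemma l1_pos: assumes "\<And>i. 0 < f i" shows "l1 n f = (\<Sum>i<n. f i)"
  unfolding l1_def by (rule sum.cong) (simp_all add: abs_of_pos assms)

lemma eta_pos: "0 < p1_eta \<gamma> \<alpha> \<beta> i"
  unfolding p1_eta_def p1_mu_def by simp

lemma mu_pos: "0 < p1_mu \<gamma> \<alpha> i"
  unfolding p1_mu_def by simp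

lemma caseS_n:
  "0 \<le> chi_square (adj_set n) (p1_pmf n \<rho> \<gamma> \<alpha> \<beta>) (p1_pmf n (\<rho> + \<delta>) \<gamma> \<alpha> \<beta>)
   \<and> chi_square (adj_set n) (p1_pmf n \<rho> \<gamma> \<alpha> \<beta>) (p1_pmf n (\<rho> + \<delta>) \<gamma> \<alpha> \<beta>)
       \<le> exp (exp \<rho> * (l1 n (p1_eta \<gamma> \<alpha> \<beta>))^2 * (exp \<bar>\<delta>\<bar> - 1)^2) - 1"
proof -
  define K where "K = (exp \<bar>\<delta>\<bar> - 1)^2"
  have K0: "0 \<le> K" unfolding K_def by simp
  define \<eta> where "\<eta> = p1_eta \<gamma> \<alpha> \<beta>"
  have we: "exp ((\<gamma> + \<alpha> i + \<beta> j) + (\<gamma> + \<alpha> j + \<beta> i) + \<rho>) = exp \<rho> * (\<eta> i * \<eta> j)" for i j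
  proof -
    have "exp ((\<gamma> + \<alpha> i + \<beta> j) + (\<gamma> + \<alpha> j + \<beta> i) + \<rho>) = exp (\<rho> + ((\<gamma>/2 + \<alpha> i) + (\<gamma>/2 + \<beta> i) + ((\<gamma>/2 + \<alpha> j) + (\<gamma>/2 + \<beta> j))))"
      by (rule arg_cong[where f=exp]) (simp add: algebra_simps)
    then show ?thesis unfolding \<eta>_def p1_eta_def p1_mu_def by (simp only: exp_add)
  qed
  have main: "0 \<le> chi_square (adj_set n) (p1_pmf n \<rho> \<gamma> \<alpha> \<beta>) (p1_pmf n (\<rho> + \<delta>) \<gamma> \<alpha> \<beta>)
   \<and> chi_square (adj_set n) (p1_pmf n \<rho> \<gamma> \<alpha> \<beta>) (p1_pmf n (\<rho> + \<delta>) \<gamma> \<alpha> \<beta>)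
       \<le> exp (\<Sum>(i,j)\<in>{(i,j). i<j \<and> j<n}. exp ((\<gamma> + \<alpha> i + \<beta> j) + (\<gamma> + \<alpha> j + \<beta> i) + \<rho>) * K) - 1"
    unfolding K_def
    apply (rule chi_generic[where p="\<lambda>i j. p1_dyad \<rho> \<gamma> \<alpha> \<beta> i j" and q="\<lambda>i j. p1_dyad (\<rho> + \<delta>) \<gamma> \<alpha> \<beta> i j"])
    apply (simp add: p1_pmf_def)
    apply (simp add: p1_pmf_def)
    apply (simp add: dyad_eq gd_pos)
    apply (simp only: dyad_eq gd_sum)
    apply (simp only: dyad_eq gd_sum)
    apply (simp only: dyad_eq, rule dyad_boundS(1))
    apply (simp only: dyad_eq, rule dyad_boundS(2))
    done
  have "(\<Sum>(i,j)\<in>{(i,j). i<j \<and> j<n}. exp ((\<gamma> + \<alpha> i + \<beta> j) + (\<gamma> + \<alpha> j + \<beta> i) + \<rho>) * K)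
      = exp \<rho> * K * (\<Sum>(i,j)\<in>{(i,j). i<j \<and> j<n}. \<eta> i * \<eta> j)"
    unfolding we by (simp add: sum_distrib_left case_prod_beta' algebra_simps)
  also have "\<dots> \<le> exp \<rho> * K * (\<Sum>i<n. \<eta> i)^2"
    by (intro mult_left_mono sumD_sq) (use K0 eta_pos in \<open>auto simp: \<eta>_def less_imp_le\<close>)
  also have "\<dots> = exp \<rho> * (l1 n (p1_eta \<gamma> \<alpha> \<beta>))^2 * (exp \<bar>\<delta>\<bar> - 1)^2"
    unfolding K_def \<eta>_def by (subst l1_pos[OF eta_pos]) simp
  finally show ?thesis using main by (smt (verit) exp_le_cancel_iff)
qed

lemma caseL_n:
  "0 \<le> chi_square (adj_set n) (p1_pmf n \<rho> \<gamma> \<alpha> \<beta>) (p1_pmf n (\<rho> + 2 * \<delta>) (\<gamma> - \<delta>) \<alpha> \<beta>)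
   \<and> chi_square (adj_set n) (p1_pmf n \<rho> \<gamma> \<alpha> \<beta>) (p1_pmf n (\<rho> + 2 * \<delta>) (\<gamma> - \<delta>) \<alpha> \<beta>)
       \<le> exp (l1 n (p1_mu \<gamma> \<alpha>) * l1 n (p1_mu \<gamma> \<beta>) * (exp \<bar>\<delta>\<bar> - 1)^2) - 1"
proof -
  define K where "K = (exp \<bar>\<delta>\<bar> - 1)^2"
  have K0: "0 \<le> K" unfolding K_def by simp
  define g where "g i j = p1_mu \<gamma> \<alpha> i * p1_mu \<gamma> \<beta> j" for i j
  have g0: "0 \<le> g i j" for i j unfolding g_def p1_mu_def by simp
  have ge: "exp (\<gamma> + \<alpha> i + \<beta> j) = g i j" for i j
  proof -
    have "exp (\<gamma> + \<alpha> i + \<beta> j) = exp ((\<gamma>/2 + \<alpha> i) + (\<gamma>/2 + \<beta> j))"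
      by (rule arg_cong[where f=exp]) (simp add: algebra_simps)
    then show ?thesis unfolding g_def p1_mu_def by (simp only: exp_add)
  qed
  have main: "0 \<le> chi_square (adj_set n) (p1_pmf n \<rho> \<gamma> \<alpha> \<beta>) (p1_pmf n (\<rho> + 2 * \<delta>) (\<gamma> - \<delta>) \<alpha> \<beta>)
   \<and> chi_square (adj_set n) (p1_pmf n \<rho> \<gamma> \<alpha> \<beta>) (p1_pmf n (\<rho> + 2 * \<delta>) (\<gamma> - \<delta>) \<alpha> \<beta>)
       \<le> exp (\<Sum>(i,j)\<in>{(i,j). i<j \<and> j<n}. (exp (\<gamma> + \<alpha> i + \<beta> j) + exp (\<gamma> + \<alpha> j + \<beta> i)) * K) - 1"
    unfolding K_def
    apply (rule chi_generic[where p="\<lambda>i j. p1_dyad \<rho> \<gamma> \<alpha> \<beta> i j" and q="\<lambda>i j. p1_dyad (\<rho> + 2 * \<delta>) (\<gamma> - \<delta>) \<alpha> \<beta> i j"])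
    apply (simp add: p1_pmf_def)
    apply (simp add: p1_pmf_def)
    apply (simp add: dyad_eq gd_pos)
    apply (simp only: dyad_eq gd_sum)
    apply (simp only: dyad_eqL dyad_eq[of \<rho> \<gamma> \<alpha> \<beta>] gd_sum)
    apply (simp only: dyad_eqL dyad_eq[of \<rho> \<gamma> \<alpha> \<beta>], rule dyad_boundL(1))
    apply (simp only: dyad_eqL dyad_eq[of \<rho> \<gamma> \<alpha> \<beta>], rule dyad_boundL(2))
    done
  have "(\<Sum>(i,j)\<in>{(i,j). i<j \<and> j<n}. (exp (\<gamma> + \<alpha> i + \<beta> j) + exp (\<gamma> + \<alpha> j + \<beta> i)) * K)
      = K * (\<Sum>(i,j)\<in>{(i,j). i<j \<and> j<n}. g i j + g j i)"
    unfolding ge by (simp add: sum_distrib_left case_prod_beta' algebra_simps)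
  also have "\<dots> \<le> K * (\<Sum>i<n. \<Sum>j<n. g i j)"
    by (intro mult_left_mono sumD_sym) (use K0 g0 in auto)
  also have "\<dots> = l1 n (p1_mu \<gamma> \<alpha>) * l1 n (p1_mu \<gamma> \<beta>) * (exp \<bar>\<delta>\<bar> - 1)^2"
    unfolding K_def g_def by (simp add: l1_pos[OF mu_pos] sum_product)
  finally show ?thesis using main by (smt (verit) exp_le_cancel_iff)
qed



lemma l1_eta_le: "l1 n (p1_eta \<gamma> \<alpha> \<beta>) \<le> l1 n (p1_mu \<gamma> \<alpha>) * l1 n (p1_mu \<gamma> \<beta>)"
proof -
  have "l1 n (p1_eta \<gamma> \<alpha> \<beta>) = (\<Sum>i<n. p1_mu \<gamma> \<alpha> i * p1_mu \<gamma> \<beta> i)"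
    by (simp add: l1_pos[OF eta_pos] p1_eta_def)
  also have "\<dots> \<le> (\<Sum>i<n. p1_mu \<gamma> \<alpha> i * (\<Sum>j<n. p1_mu \<gamma> \<beta> j))"
  proof (rule sum_mono)
    fix i assume "i \<in> {..<n}"
    then have "p1_mu \<gamma> \<beta> i \<le> (\<Sum>j<n. p1_mu \<gamma> \<beta> j)"
      by (intro member_le_sum) (auto simp: mu_pos less_imp_le)
    then show "p1_mu \<gamma> \<alpha> i * p1_mu \<gamma> \<beta> i \<le> p1_mu \<gamma> \<alpha> i * (\<Sum>j<n. p1_mu \<gamma> \<beta> j)"
      by (intro mult_left_mono) (auto simp: mu_pos less_imp_le)
  qed
  also have "\<dots> = l1 n (p1_mu \<gamma> \<alpha>) * l1 n (p1_mu \<gamma> \<beta>)"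
    by (simp add: l1_pos[OF mu_pos] sum_distrib_right)
  finally show ?thesis .
qed

theorem theorem3:
  fixes \<rho> \<gamma> \<delta>\<^sub>1 \<delta>\<^sub>2 :: "nat \<Rightarrow> real"
    and \<alpha> \<beta> :: "nat \<Rightarrow> nat \<Rightarrow> real"
  assumes sum_\<alpha>: "\<And>n. (\<Sum>i<n. \<alpha> n i) = 0"
    and sum_\<beta>: "\<And>n. (\<Sum>i<n. \<beta> n i) = 0"
    and G1_mu: "(\<lambda>n. vmax n (p1_mu (\<gamma> n) (\<alpha> n))) \<longlonglongrightarrow> 0"
    and G1_nu: "(\<lambda>n. vmax n (p1_mu (\<gamma> n) (\<beta> n))) \<longlonglongrightarrow> 0"
    and G1_eta: "(\<lambda>n. exp (\<rho> n / 2) * vmax n (p1_eta (\<gamma> n) (\<alpha> n) (\<beta> n))) \<longlonglongrightarrow> 0"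
    and G2_a: "filterlim (\<lambda>n. exp (\<rho> n / 2) * l1 n (p1_eta (\<gamma> n) (\<alpha> n) (\<beta> n))) at_top sequentially"
    and G2_b: "filterlim (\<lambda>n. l1 n (p1_eta (\<gamma> n) (\<alpha> n) (\<beta> n))) at_top sequentially"
  shows
    "((\<lambda>n. exp (\<rho> n) / exp (rho_tilde n (\<gamma> n) (\<alpha> n) (\<beta> n))) \<longlonglongrightarrow> 0
       \<and> (\<lambda>n. exp (\<rho> n) * (l1 n (p1_eta (\<gamma> n) (\<alpha> n) (\<beta> n)))^2 * (\<delta>\<^sub>1 n)^2) \<longlonglongrightarrow> 0
      \<longrightarrow> (\<lambda>n. chi_square (adj_set n)
              (p1_pmf n (\<rho> n) (\<gamma> n) (\<alpha> n) (\<beta> n))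
              (p1_pmf n (\<rho> n + \<delta>\<^sub>1 n) (\<gamma> n) (\<alpha> n) (\<beta> n))) \<longlonglongrightarrow> 0)
     \<and>
     ((\<exists>C>0. \<forall>\<^sub>F n in sequentially.
          exp (\<rho> n) \<ge> C * exp (rho_tilde n (\<gamma> n) (\<alpha> n) (\<beta> n)))
       \<and> (\<lambda>n. l1 n (p1_mu (\<gamma> n) (\<alpha> n)) * l1 n (p1_mu (\<gamma> n) (\<beta> n)) * (\<delta>\<^sub>2 n)^2) \<longlonglongrightarrow> 0
      \<longrightarrow> (\<lambda>n. chi_square (adj_set n)
              (p1_pmf n (\<rho> n) (\<gamma> n) (\<alpha> n) (\<beta> n))
              (p1_pmf n (\<rho> n + 2 * \<delta>\<^sub>2 n) (\<gamma> n - \<delta>\<^sub>2 n) (\<alpha> n) (\<beta> n))) \<longlonglongrightarrow> 0)"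
proof (intro conjI impI)
  assume "(\<lambda>n. exp (\<rho> n) / exp (rho_tilde n (\<gamma> n) (\<alpha> n) (\<beta> n))) \<longlonglongrightarrow> 0
       \<and> (\<lambda>n. exp (\<rho> n) * (l1 n (p1_eta (\<gamma> n) (\<alpha> n) (\<beta> n)))^2 * (\<delta>\<^sub>1 n)^2) \<longlonglongrightarrow> 0"
  then have lim: "(\<lambda>n. exp (\<rho> n) * (l1 n (p1_eta (\<gamma> n) (\<alpha> n) (\<beta> n)))^2 * (\<delta>\<^sub>1 n)^2) \<longlonglongrightarrow> 0" by simp
  have ev: "\<forall>\<^sub>F n in sequentially. 1 \<le> exp (\<rho> n / 2) * l1 n (p1_eta (\<gamma> n) (\<alpha> n) (\<beta> n))"
    using G2_a unfolding filterlim_at_top by blast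
  have X1: "\<forall>\<^sub>F n in sequentially. 1 \<le> exp (\<rho> n) * (l1 n (p1_eta (\<gamma> n) (\<alpha> n) (\<beta> n)))^2"
    using ev
  proof eventually_elim
    case (elim n)
    have "exp (\<rho> n) = (exp (\<rho> n / 2))^2" by (simp add: exp_double[symmetric])
    then have "exp (\<rho> n) * (l1 n (p1_eta (\<gamma> n) (\<alpha> n) (\<beta> n)))^2 = (exp (\<rho> n / 2) * l1 n (p1_eta (\<gamma> n) (\<alpha> n) (\<beta> n)))^2"
      by (simp add: power_mult_distrib)
    also have "1 \<le> \<dots>" using elim by (simp add: one_le_power)
    finally show ?case by simp
  qed
  have up: "(\<lambda>n. exp (exp (\<rho> n) * (l1 n (p1_eta (\<gamma> n) (\<alpha> n) (\<beta> n)))^2 * (exp \<bar>\<delta>\<^sub>1 n\<bar> - 1)^2) - 1) \<longlonglongrightarrow> 0"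
    using lim_aux[of "\<lambda>n. exp (\<rho> n) * (l1 n (p1_eta (\<gamma> n) (\<alpha> n) (\<beta> n)))^2" "\<delta>\<^sub>1", OF X1 lim] .
  show "(\<lambda>n. chi_square (adj_set n)
              (p1_pmf n (\<rho> n) (\<gamma> n) (\<alpha> n) (\<beta> n))
              (p1_pmf n (\<rho> n + \<delta>\<^sub>1 n) (\<gamma> n) (\<alpha> n) (\<beta> n))) \<longlonglongrightarrow> 0"
    by (rule tendsto_sandwich[OF _ _ tendsto_const up]) (auto simp: caseS_n)
next
  assume "(\<exists>C>0. \<forall>\<^sub>F n in sequentially.
          exp (\<rho> n) \<ge> C * exp (rho_tilde n (\<gamma> n) (\<alpha> n) (\<beta> n)))
       \<and> (\<lambda>n. l1 n (p1_mu (\<gamma> n) (\<alpha> n)) * l1 n (p1_mu (\<gamma> n) (\<beta> n)) * (\<delta>\<^sub>2 n)^2) \<longlonglongrightarrow> 0"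
  then have lim: "(\<lambda>n. l1 n (p1_mu (\<gamma> n) (\<alpha> n)) * l1 n (p1_mu (\<gamma> n) (\<beta> n)) * (\<delta>\<^sub>2 n)^2) \<longlonglongrightarrow> 0" by simp
  have ev: "\<forall>\<^sub>F n in sequentially. 1 \<le> l1 n (p1_eta (\<gamma> n) (\<alpha> n) (\<beta> n))"
    using G2_b unfolding filterlim_at_top by blast
  have X1: "\<forall>\<^sub>F n in sequentially. 1 \<le> l1 n (p1_mu (\<gamma> n) (\<alpha> n)) * l1 n (p1_mu (\<gamma> n) (\<beta> n))"
    using ev
  proof eventually_elim
    case (elim n)
    then show ?case using l1_eta_le[of n "\<gamma> n" "\<alpha> n" "\<beta> n"] by linarith
  qed
  have up: "(\<lambda>n. exp (l1 n (p1_mu (\<gamma> n) (\<alpha> n)) * l1 n (p1_mu (\<gamma> n) (\<beta> n)) * (exp \<bar>\<delta>\<^sub>2 n\<bar> - 1)^2) - 1) \<longlonglongrightarrow> 0"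
    using lim_aux[of "\<lambda>n. l1 n (p1_mu (\<gamma> n) (\<alpha> n)) * l1 n (p1_mu (\<gamma> n) (\<beta> n))" "\<delta>\<^sub>2", OF X1 lim] .
  show "(\<lambda>n. chi_square (adj_set n)
              (p1_pmf n (\<rho> n) (\<gamma> n) (\<alpha> n) (\<beta> n))
              (p1_pmf n (\<rho> n + 2 * \<delta>\<^sub>2 n) (\<gamma> n - \<delta>\<^sub>2 n) (\<alpha> n) (\<beta> n))) \<longlonglongrightarrow> 0"
    by (rule tendsto_sandwich[OF _ _ tendsto_const up]) (auto simp: caseL_n)
qed

end
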